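(* Let $O\in\mathbb{R}^2$, let $v$ be a uniform random point in $[0,1]^2$, and let $D$ be the diameter of $[0,1]^2\cup\{O\}$. Then $D\le 5\,\mathbb{E}(d(O,v))$.
   Context: $d$ is Euclidean distance. *)

theory Defs
  imports "HOL-Analysis.Analysis"
begin

end

theory Submission
  imports Defs
begin

lemma One_nth[simp]: "(One::real^'n) $ i = 1"
  using cart_eq_inner_axis[of One i] by fastforce

lemma One_sum_nth[simp]: "(\<Sum>x\<in>(Basis::(real^'n) set). x $ i) = 1"
  using One_nth[of i] by simp

lemma norm2: "norm (x::real^2) = sqrt ((x$1)^2 + (x$2)^2)"
  by (simp add: norm_vec_def L2_set_def sum_2)

lemma memS: "(x::real^2) \<in> cbox 0 One \<longleftrightarrow> 0 \<le> x$1 \<and> x$1 \<le> 1 \<and> 0 \<le> x$2 \<and> x$2 \<le> 1"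
  by (simp add: mem_box_cart forall_2)

lemma reflS: "(\<lambda>x. (1 / (-1::real)) *\<^sub>R x + -((1 / (-1)) *\<^sub>R (One::real^2))) ` cbox 0 One = cbox 0 One"
proof -
  have e: "(\<lambda>x. (1 / (-1::real)) *\<^sub>R x + -((1 / (-1)) *\<^sub>R (One::real^2))) = (\<lambda>x. One - x)"
    by (auto simp: algebra_simps)
  show ?thesis unfolding e
  proof (intro equalityI subsetI)
    fix y assume "y \<in> (\<lambda>x. One - x) ` cbox 0 (One::real^2)"
    then show "y \<in> cbox 0 One" by (auto simp: memS)
  next
    fix y :: "real^2" assume "y \<in> cbox 0 One"
    then have "One - y \<in> cbox 0 One" "y = One - (One - y)" by (auto simp: memS)
    then show "y \<in> (\<lambda>x. One - x) ` cbox 0 One" by blast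
  qed
qed

definition BB :: "nat \<Rightarrow> real^2" where "BB k = (real k / 12) *\<^sub>R One"
definition cc :: "real^2" where "cc = (1/2) *\<^sub>R One"

lemma memB: "(v::real^2) \<in> cbox (cc - BB k) (cc + BB k) \<longleftrightarrow>
   1/2 - real k / 12 \<le> v$1 \<and> v$1 \<le> 1/2 + real k / 12 \<and> 1/2 - real k / 12 \<le> v$2 \<and> v$2 \<le> 1/2 + real k / 12"
  by (auto simp: mem_box_cart forall_2 cc_def BB_def)

lemma subB: "k \<le> 6 \<Longrightarrow> cbox (cc - BB k) (cc + BB k) \<inter> cbox 0 One = cbox (cc - BB k) (cc + BB k)"
proof -
  assume k: "k \<le> 6"
  have "real k \<le> 6" using k by simp
  then show ?thesis by (auto simp: memS memB)
qed

lemma contB: "k \<le> 6 \<Longrightarrow> integral (cbox (0::real^2) One) (\<lambda>v. if v \<in> cbox (cc - BB k) (cc + BB k) then 1 else 0) = (real k / 6)^2"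
proof -
  assume k: "k \<le> 6"
  have sub: "cbox (cc - BB k) (cc + BB k) \<inter> cbox 0 One = cbox (cc - BB k) (cc + BB k)"
  proof -
    have "real k \<le> 6" using k by simp
    then show ?thesis by (auto simp: memS memB abs_le_iff)
  qed
  have ne: "cbox (cc - BB k) (cc + BB k) \<noteq> {}"
    using memB[of cc k] by (auto simp: cc_def)
  have "integral (cbox (0::real^2) One) (\<lambda>v. if v \<in> cbox (cc - BB k) (cc + BB k) then 1 else 0)
     = measure lborel (cbox (cc - BB k) (cc + BB k))"
    by (simp add: integral_restrict_Int sub)
  also have "\<dots> = (real k / 6)^2"
    using ne by (simp add: content_cbox_cart UNIV_2 cc_def BB_def power2_eq_square)
  finally show ?thesis .
qed

lemma hasB: "k \<le> 6 \<Longrightarrow> ((\<lambda>v. if v \<in> cbox (cc - BB k) (cc + BB k) then 1 else 0) has_integral (real k / 6)^2) (cbox (0::real^2) One)"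
proof -
  assume k: "k \<le> 6"
  have "(\<lambda>v. if v \<in> cbox (cc - BB k) (cc + BB k) then 1 else (0::real)) integrable_on (cbox (0::real^2) One)"
    by (simp add: integrable_restrict_Int subB[OF k] integrable_const)
  then show ?thesis using contB[OF k] by (metis integrable_integral)
qed

lemma contS: "measure lborel (cbox (0::real^2) One) = 1"
  by (simp add: content_cbox_cart UNIV_2)

definition hh :: "real^2 \<Rightarrow> real" where
  "hh v = (\<Sum>k\<in>{1..5::nat}. (1/12) * (1 - (if v \<in> cbox (cc - BB k) (cc + BB k) then 1 else 0)))"

lemma has_hh: "(hh has_integral (125/432)) (cbox (0::real^2) One)"
proof -
  have H: "((\<lambda>v. \<Sum>k\<in>{1..5::nat}. (1/12) * (1 - (if v \<in> cbox (cc - BB k) (cc + BB k) then 1 else 0)))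
     has_integral (\<Sum>k\<in>{1..5::nat}. (1/12) * (1 - (real k / 6)^2))) (cbox (0::real^2) One)"
  proof (rule has_integral_sum)
    fix k :: nat assume "k \<in> {1..5}"
    then have k: "k \<le> 6" by simp
    have "((\<lambda>v. 1 - (if v \<in> cbox (cc - BB k) (cc + BB k) then 1 else 0)) has_integral (1 - (real k / 6)^2)) (cbox (0::real^2) One)"
      using has_integral_diff[OF has_integral_const[of "1::real" 0 "One::real^2"] hasB[OF k]] contS by simp
    then show "((\<lambda>v. (1/12) * (1 - (if v \<in> cbox (cc - BB k) (cc + BB k) then 1 else 0))) has_integral (1/12) * (1 - (real k / 6)^2)) (cbox (0::real^2) One)"
      by (rule has_integral_mult_right)
  qed simp
  have E: "(\<Sum>k\<in>{1..5::nat}. (1/12) * (1 - (real k / 6)^2)) = (125/432::real)"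
    by (simp add: eval_nat_numeral power2_eq_square)
  show ?thesis unfolding hh_def[abs_def] using H by (simp only: E)
qed

lemma cond_m: "(1/2 - c \<le> (a::real) \<and> a \<le> 1/2 + c \<and> 1/2 - c \<le> b \<and> b \<le> 1/2 + c) \<longleftrightarrow> max \<bar>a - 1/2\<bar> \<bar>b - 1/2\<bar> \<le> c"
  by (auto simp: abs_le_iff)

lemma steps: "0 \<le> m \<Longrightarrow> (1/12) * (1 - (if m \<le> 1/12 then 1 else 0)) + (1/12) * (1 - (if m \<le> 2/12 then 1 else 0))
   + (1/12) * (1 - (if m \<le> 3/12 then 1 else 0)) + (1/12) * (1 - (if m \<le> 4/12 then 1 else 0))
   + (1/12) * (1 - (if m \<le> 5/12 then 1 else 0)) \<le> (m::real)"
  by (cases "m \<le> 1/12"; cases "m \<le> 2/12"; cases "m \<le> 3/12"; cases "m \<le> 4/12"; cases "m \<le> 5/12") auto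

lemma sum5: "(\<Sum>k\<in>{1..5::nat}. g k) = g 1 + g 2 + g 3 + g 4 + (g 5 :: real)"
proof -
  have "{1..5::nat} = {1,2,3,4,5}" by auto
  then show ?thesis by (simp add: algebra_simps)
qed

lemma hh_le: "(v::real^2) \<in> cbox 0 One \<Longrightarrow> 2 * hh v \<le> norm (2 *\<^sub>R v - One)"
proof -
  assume v: "v \<in> cbox 0 One"
  define m where "m = max \<bar>v$1 - 1/2\<bar> \<bar>v$2 - 1/2\<bar>"
  have a: "\<bar>2 * v$1 - 1\<bar> \<le> norm (2 *\<^sub>R v - One)" "\<bar>2 * v$2 - 1\<bar> \<le> norm (2 *\<^sub>R v - One)"
    using component_le_norm_cart[of "2 *\<^sub>R v - One" 1] component_le_norm_cart[of "2 *\<^sub>R v - One" 2] by auto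
  have b: "\<bar>2 * v$1 - 1\<bar> = 2 * \<bar>v$1 - 1/2\<bar>" "\<bar>2 * v$2 - 1\<bar> = 2 * \<bar>v$2 - 1/2\<bar>" by (simp_all add: abs_if)
  have a2: "2 * m \<le> norm (2 *\<^sub>R v - One)" unfolding m_def using a b by (simp add: max_def)
  have m0: "0 \<le> m" unfolding m_def by simp
  have "hh v = (\<Sum>k\<in>{1..5::nat}. (1/12) * (1 - (if m \<le> real k / 12 then 1 else 0)))"
    unfolding hh_def memB cond_m m_def ..
  also have "\<dots> = (1/12) * (1 - (if m \<le> 1/12 then 1 else 0)) + (1/12) * (1 - (if m \<le> 2/12 then 1 else 0))
   + (1/12) * (1 - (if m \<le> 3/12 then 1 else 0)) + (1/12) * (1 - (if m \<le> 4/12 then 1 else 0))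
   + (1/12) * (1 - (if m \<le> 5/12 then 1 else 0))"
    by (simp only: sum5 of_nat_1 of_nat_numeral)
  finally show ?thesis using a2 steps[OF m0] by linarith
qed


lemma sqrt2_le: "sqrt 2 \<le> (625/432::real)"
proof -
  have "sqrt 2 \<le> sqrt ((625/432::real)^2)" by (rule real_sqrt_le_mono) (simp add: power2_eq_square)
  then show ?thesis by simp
qed

lemma sq1: "\<bar>a::real\<bar> \<le> c \<Longrightarrow> a^2 \<le> c^2"
  using power_mono[of "\<bar>a\<bar>" c 2] by simp

lemma normS: "(x::real^2) \<in> cbox 0 One \<Longrightarrow> y \<in> cbox 0 One \<Longrightarrow> norm (x - y) \<le> sqrt 2"
proof -
  assume x: "x \<in> cbox 0 One" and y: "y \<in> cbox 0 One"
  have "(x$1 - y$1)^2 \<le> 1" "(x$2 - y$2)^2 \<le> 1"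
    using x y unfolding memS by (intro sq1[where c=1, simplified]; simp add: abs_le_iff)+
  then have "(x$1 - y$1)^2 + (x$2 - y$2)^2 \<le> 2" by simp
  then show ?thesis unfolding norm2 by (simp add: real_sqrt_le_mono)
qed

lemma normC: "(y::real^2) \<in> cbox 0 One \<Longrightarrow> norm (cc - y) \<le> 1"
proof -
  assume y: "y \<in> cbox 0 One"
  have "(1/2 - y$1)^2 \<le> (1/2)^2" "(1/2 - y$2)^2 \<le> (1/2)^2"
    using y unfolding memS by (intro sq1; auto simp: abs_if)+
  then have "(1/2 - y$1)^2 \<le> 1/4" "(1/2 - y$2)^2 \<le> 1/4" by (simp_all add: power2_eq_square)
  then have "(1/2 - y$1)^2 + (1/2 - y$2)^2 \<le> 1" by simp
  then show ?thesis unfolding norm2 by (simp add: cc_def real_sqrt_le_1_iff)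
qed

theorem lemma18:
  fixes p :: "real^2"
  shows "diameter (cbox (0::real^2) One \<union> {p})
           \<le> 5 * integral (cbox (0::real^2) One) (\<lambda>v. dist p v)"
proof -
  define S where "S = cbox (0::real^2) One"
  define I where "I = integral S (\<lambda>v. dist p v)"
  have intf: "(\<lambda>v. dist p v) integrable_on S"
    unfolding S_def by (intro integrable_continuous continuous_intros)
  then have hI: "((\<lambda>v. dist p v) has_integral I) S" unfolding I_def by (rule integrable_integral)
  have "((\<lambda>x. dist p ((-1) *\<^sub>R x + One)) has_integral (1 / (\<bar>-1\<bar> ^ DIM(real^2))) *\<^sub>R I)
      ((\<lambda>x. (1 / (-1::real)) *\<^sub>R x + -((1 / (-1)) *\<^sub>R (One::real^2))) ` S)"
    using hI unfolding S_def by (intro has_integral_affinity) auto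
  then have hR: "((\<lambda>x. dist p (One - x)) has_integral I) S"
    unfolding reflS S_def by (simp add: algebra_simps)
  have hsum: "((\<lambda>v. dist p v + dist p (One - v)) has_integral (I + I)) S"
    by (rule has_integral_add[OF hI hR])
  have l1: "2 * (125/432) \<le> I + I"
  proof (rule has_integral_le[OF has_integral_mult_right[OF has_hh[folded S_def], of 2] hsum])
    fix v assume "v \<in> S"
    then have "2 * hh v \<le> norm (2 *\<^sub>R v - One)" using hh_le S_def by blast
    also have "norm (2 *\<^sub>R v - One) \<le> dist p v + dist p (One - v)"
    proof -
      have "2 *\<^sub>R v - One = (p - (One - v)) - (p - v)" by (simp add: algebra_simps scaleR_2)
      then have "norm (2 *\<^sub>R v - One) \<le> norm (p - (One - v)) + norm (p - v)"
        by (metis norm_triangle_ineq4)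
      then show ?thesis by (simp add: dist_norm)
    qed
    finally show "2 * hh v \<le> dist p v + dist p (One - v)" .
  qed
  have hconst: "((\<lambda>v. norm (2 *\<^sub>R p - One)) has_integral norm (2 *\<^sub>R p - One)) S"
    using has_integral_const[of "norm (2 *\<^sub>R p - One)" 0 "One::real^2"] contS unfolding S_def by simp
  have l2: "norm (2 *\<^sub>R p - One) \<le> I + I"
  proof (rule has_integral_le[OF hconst hsum])
    fix v assume "v \<in> S"
    have "2 *\<^sub>R p - One = (p - v) + (p - (One - v))" by (simp add: algebra_simps scaleR_2)
    then have "norm (2 *\<^sub>R p - One) \<le> norm (p - v) + norm (p - (One - v))"
      by (metis norm_triangle_ineq)
    then show "norm (2 *\<^sub>R p - One) \<le> dist p v + dist p (One - v)" by (simp add: dist_norm)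
  qed
  have pc: "norm (p - cc) \<le> I"
  proof -
    have "2 *\<^sub>R p - One = 2 *\<^sub>R (p - cc)" by (simp add: cc_def algebra_simps scaleR_2)
    then have "norm (2 *\<^sub>R p - One) = 2 * norm (p - cc)" by simp
    then show ?thesis using l2 by simp
  qed
  have pS: "norm (p - y) \<le> 5 * I" if y: "y \<in> S" for y
  proof -
    have "norm (p - y) \<le> norm (p - cc) + norm (cc - y)"
      using norm_triangle_ineq[of "p - cc" "cc - y"] by simp
    also have "\<dots> \<le> I + 1" using pc normC y S_def by force
    also have "\<dots> \<le> 5 * I" using l1 by simp
    finally show ?thesis .
  qed
  have "diameter (S \<union> {p}) \<le> 5 * I"
  proof (rule diameter_le)
    show "S \<union> {p} \<noteq> {} \<or> 0 \<le> 5 * I" by simp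
    fix x y assume x: "x \<in> S \<union> {p}" and y: "y \<in> S \<union> {p}"
    show "norm (x - y) \<le> 5 * I"
    proof (cases "x = p")
      case True
      show ?thesis
      proof (cases "y = p")
        case True
        then show ?thesis using \<open>x = p\<close> l1 by simp
      next
        case False
        then show ?thesis using \<open>x = p\<close> y pS by auto
      qed
    next
      case False
      then have xS: "x \<in> S" using x by auto
      show ?thesis
      proof (cases "y = p")
        case True
        then show ?thesis using xS pS[of x] by (simp add: norm_minus_commute)
      next
        case False
        then have "y \<in> S" using y by auto
        then have "norm (x - y) \<le> sqrt 2" using xS normS S_def by blast
        also have "\<dots> \<le> 5 * I" using sqrt2_le l1 by simp
        finally show ?thesis .
      qed
    qed
  qed
  then show ?thesis unfolding S_def I_def .
qed

end
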